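(* Suppose that $u^*(t,x)$ is a strictly positive and bounded measurable function on $\mathbb{R}\times \bar D$ (i.e. $\inf_{t\in\mathbb{R},x\in\bar D}u^*(t,x)>0$ and $\sup_{t\in\mathbb{R},x\in\bar D}u^*(t,x)<\infty$), is differentiable in $t$ for each $x\in\bar D$, and satisfies $$\frac{\partial u^*}{\partial t}(t,x)=\int_D \kappa(y-x)u^*(t,y)\,dy+u^*(t,x)f(t,x,u^*(t,x)) \quad \text{for all } t\in\mathbb{R},\ x\in \bar D.$$ Then $u^*(t,x)$ is uniformly continuous in $(t,x)\in\mathbb{R}\times\bar D$, and the map $\mathbb{R}\ni t\mapsto u^*(t,\cdot)\in X$ is differentiable; hence $u^*(t,x)$ is a strictly positive bounded entire solution of the equation $\partial_t u=\int_D \kappa(y-x)u(t,y)\,dy+u f(t,x,u)$, $x\in\bar D$.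
   Context: $D\subset\mathbb{R}^N$ is a bounded domain or $D=\mathbb{R}^N$. The kernel satisfies: $\kappa\in C^1(\mathbb{R}^N,[0,\infty))$, $\kappa(0)>0$, $\int_{\mathbb{R}^N}\kappa(x)dx=1$, and there are $\mu,M>0$ with $\kappa(x)\le e^{-\mu|x|}$ and $|\nabla\kappa(x)|\le e^{-\mu|x|}$ for $|x|\ge M$. The nonlinearity satisfies: $f(t,x,u)$ is $C^1$ in $u$; $f$ and $f_u$ are uniformly continuous and bounded on $\mathbb{R}\times\bar D\times E$ for any bounded $E\subset\mathbb{R}$; $f$ is almost periodic in $t$ uniformly with respect to $x\in\bar D$ and $u$ in bounded sets, and also almost periodic in $x$ uniformly with respect to $t$ and $u$ in bounded sets when $D=\mathbb{R}^N$; $f(t,x,u)+1<0$ for all $(t,x)$ and $u\gg1$; and $\sup_{t\in\mathbb{R},x\in\bar D}f_u(t,x,u)<0$ for each $u\ge0$. $X=C^b_{\rm unif}(\bar D)$ is the space of bounded uniformly continuous functions on $\bar D$ with the sup norm. A solution on an interval $I$ means $u(t,\cdot)\in X$ for each $t\in I$ and $I\ni t\mapsto u(t,\cdot)\in X$ is differentiable; an entire solution is one defined for all $t\in\mathbb{R}$. *)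

theory Defs
  imports "HOL-Analysis.Analysis"
begin

definition admissible_domain :: "'a::euclidean_space set \<Rightarrow> bool" where
  "admissible_domain D \<longleftrightarrow> (D \<noteq> {} \<and> open D \<and> connected D \<and> bounded D) \<or> D = UNIV"

definition kernel_hyp :: "('a::euclidean_space \<Rightarrow> real) \<Rightarrow> bool" where
  "kernel_hyp \<kappa> \<longleftrightarrow>
     (\<exists>g::'a \<Rightarrow> 'a.
        (\<forall>x. (\<kappa> has_derivative (\<lambda>h. g x \<bullet> h)) (at x)) \<and> continuous_on UNIV g \<and>
        (\<forall>x. \<kappa> x \<ge> 0) \<and> \<kappa> 0 > 0 \<and>
        integrable lborel \<kappa> \<and> integral\<^sup>L lborel \<kappa> = 1 \<and>
        (\<exists>\<mu>>0. \<exists>M>0. \<forall>x. norm x \<ge> M \<longrightarrow>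
            \<kappa> x \<le> exp (- \<mu> * norm x) \<and> norm (g x) \<le> exp (- \<mu> * norm x)))"

definition almost_periodic_t :: "'a::euclidean_space set \<Rightarrow> (real \<Rightarrow> 'a \<Rightarrow> real \<Rightarrow> real) \<Rightarrow> bool" where
  "almost_periodic_t D f \<longleftrightarrow>
     (\<forall>E::real set. bounded E \<longrightarrow> (\<forall>\<epsilon>>0. \<exists>l>0. \<forall>a. \<exists>\<tau>\<in>{a..a+l}.
        \<forall>t. \<forall>x\<in>closure D. \<forall>u\<in>E. \<bar>f (t + \<tau>) x u - f t x u\<bar> < \<epsilon>))"

definition almost_periodic_x :: "(real \<Rightarrow> 'a::euclidean_space \<Rightarrow> real \<Rightarrow> real) \<Rightarrow> bool" where
  "almost_periodic_x f \<longleftrightarrow>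
     (\<forall>E::real set. bounded E \<longrightarrow> (\<forall>\<epsilon>>0. \<exists>l>0. \<forall>a::'a. \<exists>\<tau>\<in>cball a l.
        \<forall>t. \<forall>x. \<forall>u\<in>E. \<bar>f t (x + \<tau>) u - f t x u\<bar> < \<epsilon>))"

definition nonlin_hyp :: "'a::euclidean_space set \<Rightarrow> (real \<Rightarrow> 'a \<Rightarrow> real \<Rightarrow> real)
     \<Rightarrow> (real \<Rightarrow> 'a \<Rightarrow> real \<Rightarrow> real) \<Rightarrow> bool" where
  "nonlin_hyp D f fu \<longleftrightarrow>
     (\<forall>t. \<forall>x\<in>closure D. \<forall>u. ((\<lambda>v. f t x v) has_real_derivative fu t x u) (at u)) \<and>
     (\<forall>E::real set. bounded E \<longrightarrow>
        uniformly_continuous_on (UNIV \<times> closure D \<times> E) (\<lambda>(t, x, u). f t x u) \<and>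
        bounded ((\<lambda>(t, x, u). f t x u) ` (UNIV \<times> closure D \<times> E)) \<and>
        uniformly_continuous_on (UNIV \<times> closure D \<times> E) (\<lambda>(t, x, u). fu t x u) \<and>
        bounded ((\<lambda>(t, x, u). fu t x u) ` (UNIV \<times> closure D \<times> E))) \<and>
     almost_periodic_t D f \<and>
     (D = UNIV \<longrightarrow> almost_periodic_x f) \<and>
     (\<exists>U. \<forall>u\<ge>U. \<forall>t. \<forall>x\<in>closure D. f t x u + 1 < 0) \<and>
     (\<forall>u\<ge>0. (SUP (t, x)\<in>UNIV \<times> closure D. fu t x u) < 0)"

text \<open>Membership in X = bounded uniformly continuous functions on S (with sup norm).\<close>
definition in_X :: "'a::metric_space set \<Rightarrow> ('a \<Rightarrow> real) \<Rightarrow> bool" where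
  "in_X S v \<longleftrightarrow> bounded (v ` S) \<and> uniformly_continuous_on S v"

definition has_X_derivative :: "'a::metric_space set \<Rightarrow> (real \<Rightarrow> 'a \<Rightarrow> real) \<Rightarrow> ('a \<Rightarrow> real) \<Rightarrow> real \<Rightarrow> bool" where
  "has_X_derivative S U V t \<longleftrightarrow> in_X S V \<and>
     (\<forall>\<epsilon>>0. \<forall>\<^sub>F h in at 0. \<forall>x\<in>S. \<bar>(U (t + h) x - U t x) / h - V x\<bar> \<le> \<epsilon>)"

end

theory Submission
  imports Defs
begin

lemma lborel_translate:
  fixes g :: "'a::euclidean_space \<Rightarrow> real" and h :: 'a
  assumes g: "g \<in> borel_measurable borel"
  shows "integrable lborel (\<lambda>z. g (z + h)) \<longleftrightarrow> integrable lborel g"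
    and "(LINT z|lborel. g (z + h)) = (LINT z|lborel. g z)"
proof -
  have m: "(+) h \<in> lborel \<rightarrow>\<^sub>M borel"
    by measurable
  have gm: "g \<in> borel_measurable borel" using g .
  have "integrable (distr lborel borel ((+) h)) g = integrable lborel (\<lambda>x. g (h + x))"
    by (rule integrable_distr_eq[OF m gm])
  then show "integrable lborel (\<lambda>z. g (z + h)) \<longleftrightarrow> integrable lborel g"
    by (simp add: lborel_distr_plus add.commute)
  have "integral\<^sup>L (distr lborel borel ((+) h)) g = (LINT x|lborel. g (h + x))"
    by (rule integral_distr[OF m gm])
  then show "(LINT z|lborel. g (z + h)) = (LINT z|lborel. g z)"
    by (simp add: lborel_distr_plus add.commute)
qed


lemma L1_translate_cont:
  fixes k :: "'a::euclidean_space \<Rightarrow> real"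
  assumes kc: "continuous_on UNIV k" and ki: "integrable lborel k" and e: "\<epsilon> > 0"
  shows "\<exists>\<delta>>0. \<forall>h. norm h < \<delta> \<longrightarrow> (LINT z|lborel. \<bar>k (z + h) - k z\<bar>) \<le> \<epsilon>"
proof -
  have km: "k \<in> borel_measurable borel" using kc by (rule borel_measurable_continuous_onI)
  define A where "A n = {z::'a. real n \<le> norm z}" for n :: nat
  have Aset[measurable]: "A n \<in> sets borel" for n
    unfolding A_def by measurable
  define T where "T n = (LINT z|lborel. indicator (A n) z * \<bar>k z\<bar>)" for n
  have kim: "integrable lborel (\<lambda>z. \<bar>k z\<bar>)" using ki by (rule integrable_abs)
  have kAi: "integrable lborel (\<lambda>z. indicator (A n) z * \<bar>k z\<bar>)" for n
    using integrable_mult_indicator[OF _ kim, of "A n"] by simp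
  have "(\<lambda>n. T n) \<longlonglongrightarrow> integral\<^sup>L (lborel::'a measure) (\<lambda>z. 0)"
    unfolding T_def
  proof (rule integral_dominated_convergence[where w="\<lambda>z. \<bar>k z\<bar>" and s="\<lambda>n z. indicator (A n) z * \<bar>k z\<bar>" and f="\<lambda>z. 0"])
    show "(\<lambda>z. 0::real) \<in> borel_measurable lborel" by simp
    show "(\<lambda>z. indicator (A n) z * \<bar>k z\<bar>) \<in> borel_measurable lborel" for n
      using kAi borel_measurable_integrable by blast
    show "integrable lborel (\<lambda>z. \<bar>k z\<bar>)" by (rule kim)
    show "AE z in lborel. (\<lambda>n. indicator (A n) z * \<bar>k z\<bar>) \<longlonglongrightarrow> 0"
    proof (rule AE_I2)
      fix z :: 'a
      have "eventually (\<lambda>n. indicator (A n) z * \<bar>k z\<bar> = 0) sequentially"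
        unfolding eventually_sequentially
      proof (intro exI allI impI)
        fix n assume "nat \<lceil>norm z\<rceil> + 1 \<le> n"
        then have "norm z < real n" by linarith
        then show "indicator (A n) z * \<bar>k z\<bar> = 0" by (simp add: A_def)
      qed
      then show "(\<lambda>n. indicator (A n) z * \<bar>k z\<bar>) \<longlonglongrightarrow> 0"
        by (rule tendsto_eventually)
    qed
    show "AE z in lborel. norm (indicator (A n) z * \<bar>k z\<bar>) \<le> \<bar>k z\<bar>" for n
      by (rule AE_I2) (simp split: split_indicator)
  qed
  then have "T \<longlonglongrightarrow> 0" by simp
  then have "eventually (\<lambda>n. T n < \<epsilon>/4) sequentially"
    using e by (intro order_tendstoD(2)) auto
  then obtain N where TN: "T N < \<epsilon>/4" using eventually_sequentially by auto
  define R where "R = real N + 1"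
  have "uniformly_continuous_on (cball 0 (R+1)) k"
    by (rule compact_uniformly_continuous) (auto intro: continuous_on_subset[OF kc])
  note uc = this[unfolded uniformly_continuous_on_def]
  have Vi: "integrable lborel (\<lambda>z::'a. indicator (cball 0 R) z :: real)"
    using borel_integrable_compact[of "cball (0::'a) R" "\<lambda>_. 1::real"] by simp
  define V where "V = (LINT z|lborel. indicator (cball (0::'a) R) z :: real)"
  have V0: "0 \<le> V" unfolding V_def by (intro integral_nonneg_AE) auto
  define \<eta> where "\<eta> = \<epsilon> / (4 * (V + 1))"
  have eta: "\<eta> > 0" using e V0 by (simp add: \<eta>_def)
  obtain \<delta>1 where d1: "\<delta>1 > 0" and
    d1': "\<And>x y. x \<in> cball 0 (R+1) \<Longrightarrow> y \<in> cball 0 (R+1) \<Longrightarrow> dist y x < \<delta>1 \<Longrightarrow> dist (k y) (k x) < \<eta>"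
    using uc eta by metis
  show ?thesis
  proof (intro exI[of _ "min 1 \<delta>1"] conjI allI impI)
    show "0 < min 1 \<delta>1" using d1 by simp
    fix h :: 'a assume h: "norm h < min 1 \<delta>1"
    define P where "P z = \<eta> * (indicator (cball 0 R) z) + indicator (A N) z * \<bar>k z\<bar>
       + indicator (A N) (z + h) * \<bar>k (z + h)\<bar>" for z
    have kh: "integrable lborel (\<lambda>z. k (z + h))"
      using lborel_translate(1)[OF km] ki by simp
    have kAh: "integrable lborel (\<lambda>z. indicator (A N) (z + h) * \<bar>k (z + h)\<bar>)"
      using lborel_translate(1)[of "\<lambda>z. indicator (A N) z * \<bar>k z\<bar>" h] kAi km by simp
    have TNh: "(LINT z|lborel. indicator (A N) (z + h) * \<bar>k (z + h)\<bar>) = T N"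
      unfolding T_def using lborel_translate(2)[of "\<lambda>z. indicator (A N) z * \<bar>k z\<bar>" h] km by simp
    have Pi: "integrable lborel P"
    proof -
      have "integrable lborel (\<lambda>z::'a. \<eta> * (indicator (cball 0 R) z :: real))"
        using Vi by (intro integrable_mult_right)
      then show ?thesis unfolding P_def
        by (rule Bochner_Integration.integrable_add[OF Bochner_Integration.integrable_add[OF _ kAi] kAh])
    qed
    have IP: "(LINT z|lborel. P z) = \<eta> * V + T N + T N"
    proof -
      have i1: "integrable lborel (\<lambda>z::'a. \<eta> * (indicator (cball 0 R) z :: real))"
        using Vi by (intro integrable_mult_right)
      have "(LINT z|lborel. P z) = (LINT z|lborel. \<eta> * indicator (cball 0 R) z + indicator (A N) z * \<bar>k z\<bar>)
         + (LINT z|lborel. indicator (A N) (z + h) * \<bar>k (z + h)\<bar>)"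
        unfolding P_def[abs_def]
        by (rule Bochner_Integration.integral_add[OF Bochner_Integration.integrable_add[OF i1 kAi] kAh])
      also have "(LINT z|lborel. \<eta> * indicator (cball 0 R) z + indicator (A N) z * \<bar>k z\<bar>) = \<eta> * V + T N"
        unfolding V_def T_def by (subst Bochner_Integration.integral_add[OF i1 kAi]) simp
      finally show ?thesis using TNh by simp
    qed
    have pw: "\<bar>k (z + h) - k z\<bar> \<le> P z" for z
    proof (cases "norm z \<le> R")
      case True
      have "z \<in> cball 0 (R+1)" using True by simp
      moreover have "z + h \<in> cball 0 (R+1)" using True h norm_triangle_ineq[of z h] by simp
      moreover have "dist (z + h) z < \<delta>1" using h by (simp add: dist_norm)
      ultimately have "\<bar>k (z + h) - k z\<bar> < \<eta>" using d1' by (simp add: dist_real_def)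
      moreover have "0 \<le> indicator (A N) z * \<bar>k z\<bar>" by simp
      moreover have "0 \<le> indicator (A N) (z + h) * \<bar>k (z + h)\<bar>" by simp
      moreover have "\<eta> * indicator (cball 0 R) z = \<eta>" using True by simp
      ultimately show ?thesis unfolding P_def by linarith
    next
      case False
      then have z1: "z \<in> A N" by (simp add: A_def R_def)
      have "norm z \<le> norm (z + h) + norm h" using norm_triangle_ineq4[of "z + h" h] by simp
      then have "z + h \<in> A N" using False h by (simp add: A_def R_def)
      with z1 False show ?thesis using eta by (simp add: P_def)
    qed
    have "(LINT z|lborel. \<bar>k (z + h) - k z\<bar>) \<le> (LINT z|lborel. P z)"
      using kh ki Pi pw by (intro integral_mono) auto
    also have "\<dots> \<le> \<epsilon>/4 + \<epsilon>/4 + \<epsilon>/4"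
    proof -
      have "\<eta> * V \<le> \<epsilon>/4" using V0 e by (simp add: \<eta>_def field_simps)
      then show ?thesis using IP TN by simp
    qed
    finally show "(LINT z|lborel. \<bar>k (z + h) - k z\<bar>) \<le> \<epsilon>" using e by simp
  qed
qed

lemma K_facts:
  fixes k :: "'a::euclidean_space \<Rightarrow> real" and U :: "'a \<Rightarrow> real"
  assumes kc: "continuous_on UNIV k" and ki: "integrable lborel k" and k0: "\<And>x. k x \<ge> 0"
    and k1: "integral\<^sup>L lborel k = 1"
    and Um: "U \<in> borel_measurable borel" and Ub: "\<And>y. \<bar>U y\<bar> \<le> C"
  shows K_int: "integrable lborel (\<lambda>y. k (y - x) * U y)"
    and K_bnd: "\<bar>LINT y|lborel. k (y - x) * U y\<bar> \<le> C"
    and K_lip: "\<bar>(LINT y|lborel. k (y - x1) * U y) - (LINT y|lborel. k (y - x2) * U y)\<bar>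
         \<le> C * (LINT z|lborel. \<bar>k (z + (x1 - x2)) - k z\<bar>)"
proof -
  have km: "k \<in> borel_measurable borel" using kc by (rule borel_measurable_continuous_onI)
  have kx: "integrable lborel (\<lambda>y. k (y - x))" for x
    using lborel_translate(1)[OF km, of "-x"] ki by simp
  have kx1: "(LINT y|lborel. k (y - x)) = 1" for x
    using lborel_translate(2)[OF km, of "-x"] k1 by simp
  have Um': "U \<in> borel_measurable lborel" using Um by simp
  have Ci: "integrable lborel (\<lambda>y. C * k (y - x))" for x using kx[of x] by (intro integrable_mult_right)
  show KI: "integrable lborel (\<lambda>y. k (y - x) * U y)" for x
  proof (rule Bochner_Integration.integrable_bound[OF Ci])
    show "(\<lambda>y. k (y - x) * U y) \<in> borel_measurable lborel"
      using kx[of x] Um' by (intro borel_measurable_times) (auto dest: borel_measurable_integrable)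
    show "AE y in lborel. norm (k (y - x) * U y) \<le> norm (C * k (y - x))"
    proof (rule AE_I2)
      fix y
      have "\<bar>k (y - x) * U y\<bar> = k (y - x) * \<bar>U y\<bar>" using k0 by (simp add: abs_mult)
      also have "\<dots> \<le> k (y - x) * C" using k0 Ub by (intro mult_left_mono) auto
      also have "\<dots> \<le> \<bar>C * k (y - x)\<bar>" by (simp add: mult.commute)
      finally show "norm (k (y - x) * U y) \<le> norm (C * k (y - x))" by simp
    qed
  qed
  show "\<bar>LINT y|lborel. k (y - x) * U y\<bar> \<le> C"
  proof -
    have "\<bar>LINT y|lborel. k (y - x) * U y\<bar> \<le> (LINT y|lborel. \<bar>k (y - x) * U y\<bar>)"
      by (rule integral_abs_bound)
    also have "\<dots> \<le> (LINT y|lborel. C * k (y - x))"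
    proof (rule integral_mono)
      show "integrable lborel (\<lambda>y. \<bar>k (y - x) * U y\<bar>)" using KI by (rule integrable_abs)
      show "integrable lborel (\<lambda>y. C * k (y - x))" by (rule Ci)
      fix y
      have "\<bar>k (y - x) * U y\<bar> = k (y - x) * \<bar>U y\<bar>" using k0 by (simp add: abs_mult)
      also have "\<dots> \<le> k (y - x) * C" using k0 Ub by (intro mult_left_mono) auto
      finally show "\<bar>k (y - x) * U y\<bar> \<le> C * k (y - x)" by (simp add: mult.commute)
    qed
    also have "\<dots> = C" using kx1[of x] by simp
    finally show ?thesis .
  qed
  show "\<bar>(LINT y|lborel. k (y - x1) * U y) - (LINT y|lborel. k (y - x2) * U y)\<bar>
         \<le> C * (LINT z|lborel. \<bar>k (z + (x1 - x2)) - k z\<bar>)"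
  proof -
    define G where "G y = (k (y - x1) - k (y - x2)) * U y" for y
    have Gm: "G \<in> borel_measurable borel"
      unfolding G_def using km Um by measurable
    have "(LINT y|lborel. k (y - x1) * U y) - (LINT y|lborel. k (y - x2) * U y) = (LINT y|lborel. G y)"
      unfolding G_def using KI[of x1] KI[of x2]
      by (subst Bochner_Integration.integral_diff[symmetric]) (auto simp: algebra_simps)
    also have "\<dots> = (LINT z|lborel. G (z + x1))"
      using lborel_translate(2)[OF Gm, of x1] by simp
    finally have eq: "(LINT y|lborel. k (y - x1) * U y) - (LINT y|lborel. k (y - x2) * U y) = (LINT z|lborel. G (z + x1))" .
    have di: "integrable lborel (\<lambda>z. \<bar>k (z + (x1 - x2)) - k z\<bar>)"
    proof -
      have "integrable lborel (\<lambda>z. k (z + (x1 - x2)))" using lborel_translate(1)[OF km] ki by simp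
      then show ?thesis using ki by (intro integrable_abs Bochner_Integration.integrable_diff)
    qed
    have Gi: "integrable lborel (\<lambda>z. G (z + x1))"
    proof -
      have "integrable lborel G" unfolding G_def using KI[of x1] KI[of x2]
        by (auto simp: algebra_simps intro!: Bochner_Integration.integrable_diff)
      then show ?thesis using lborel_translate(1)[OF Gm] by simp
    qed
    have "\<bar>LINT z|lborel. G (z + x1)\<bar> \<le> (LINT z|lborel. \<bar>G (z + x1)\<bar>)" by (rule integral_abs_bound)
    also have "\<dots> \<le> (LINT z|lborel. C * \<bar>k (z + (x1 - x2)) - k z\<bar>)"
    proof (rule integral_mono)
      show "integrable lborel (\<lambda>z. \<bar>G (z + x1)\<bar>)" using Gi by (rule integrable_abs)
      show "integrable lborel (\<lambda>z. C * \<bar>k (z + (x1 - x2)) - k z\<bar>)" using di by (intro integrable_mult_right)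
      fix z
      have "\<bar>G (z + x1)\<bar> = \<bar>k (z + (x1 - x2)) - k z\<bar> * \<bar>U (z + x1)\<bar>"
      proof -
        have "G (z + x1) = - ((k (z + (x1 - x2)) - k z) * U (z + x1))"
          by (simp add: G_def algebra_simps)
        then show ?thesis by (simp only: abs_minus_cancel abs_mult)
      qed
      also have "\<dots> \<le> \<bar>k (z + (x1 - x2)) - k z\<bar> * C" using Ub by (intro mult_left_mono) auto
      finally show "\<bar>G (z + x1)\<bar> \<le> C * \<bar>k (z + (x1 - x2)) - k z\<bar>" by (simp add: mult.commute)
    qed
    also have "\<dots> = C * (LINT z|lborel. \<bar>k (z + (x1 - x2)) - k z\<bar>)" by simp
    finally show ?thesis using eq by simp
  qed
qed


lemma ode_bound:
  fixes w w' :: "real \<Rightarrow> real"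
  assumes der: "\<And>t. (w has_real_derivative w' t) (at t)"
    and bnd: "\<And>t. \<bar>w t\<bar> \<le> B" and b: "\<beta> > 0"
    and dec: "\<And>t. w t > m \<Longrightarrow> w' t \<le> -\<beta>"
  shows "w t \<le> m"
proof (rule ccontr)
  assume "\<not> w t \<le> m"
  then have wt: "w t > m" by simp
  have cont: "continuous_on UNIV w"
    using der by (intro continuous_at_imp_continuous_on) (auto intro: DERIV_isCont)
  have bk: "w t \<le> w a" if at0: "a \<le> t" for a
  proof -
    obtain p where p: "p \<in> {a..t}" "\<forall>s\<in>{a..t}. w s \<le> w p"
      using continuous_attains_sup[of "{a..t}" w] at0 continuous_on_subset[OF cont] by auto
    have "p = a"
    proof (rule ccontr)
      assume "p \<noteq> a"
      then have pa: "p > a" using p by auto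
      have "w p \<ge> w t" using p at0 by auto
      then have "w' p < 0" using dec[of p] wt b by auto
      then obtain d where d: "d > 0" "\<forall>h>0. h < d \<longrightarrow> w p < w (p - h)"
        using DERIV_neg_dec_left[OF der[of p]] by blast
      define h where "h = min (d/2) (p - a)"
      have "h > 0" "h < d" using d pa by (auto simp: h_def)
      then have "w p < w (p - h)" using d by auto
      moreover have "p - h \<in> {a..t}" using p pa \<open>h > 0\<close> by (auto simp: h_def)
      ultimately show False using p by fastforce
    qed
    then show ?thesis using p by auto
  qed
  have B0: "B \<ge> 0" using bnd[of 0] by simp
  define a where "a = t - (2*B + 1)/\<beta>"
  have at: "a \<le> t" using B0 b by (simp add: a_def)
  have "(\<lambda>s. w s + \<beta> * s) t \<le> (\<lambda>s. w s + \<beta> * s) a"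
  proof (rule DERIV_nonpos_imp_nonincreasing[OF at])
    fix s assume s: "a \<le> s" "s \<le> t"
    have "w s > m" using bk[of s] s wt by auto
    then have "w' s + \<beta> \<le> 0" using dec by force
    moreover have "((\<lambda>s. w s + \<beta> * s) has_real_derivative w' s + \<beta>) (at s)"
      by (auto intro!: derivative_eq_intros der)
    ultimately show "\<exists>y. ((\<lambda>s. w s + \<beta> * s) has_real_derivative y) (at s) \<and> y \<le> 0" by blast
  qed
  then have "w a \<ge> w t + \<beta> * (t - a)" by (simp add: algebra_simps)
  also have "\<beta> * (t - a) = 2*B + 1" using b by (simp add: a_def)
  finally have "w a \<ge> w t + 2*B + 1" by simp
  moreover have "w t \<ge> -B" "w a \<le> B" using bnd[of t] bnd[of a] by auto
  ultimately show False by simp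
qed


lemma mvt_any:
  fixes \<phi> \<phi>' :: "real \<Rightarrow> real"
  assumes der: "\<And>s. (\<phi> has_real_derivative \<phi>' s) (at s)"
  shows "\<exists>z. \<bar>z - a\<bar> \<le> \<bar>b - a\<bar> \<and> \<phi> b - \<phi> a = (b - a) * \<phi>' z"
proof (cases a b rule: linorder_cases)
  case less
  then obtain z where "z > a" "z < b" "\<phi> b - \<phi> a = (b - a) * \<phi>' z"
    using MVT2[of a b \<phi> \<phi>'] der by blast
  then show ?thesis by (intro exI[of _ z]) auto
next
  case equal then show ?thesis by auto
next
  case greater
  then obtain z where "z > b" "z < a" "\<phi> a - \<phi> b = (a - b) * \<phi>' z"
    using MVT2[of b a \<phi> \<phi>'] der by blast
  then show ?thesis by (intro exI[of _ z]) (auto simp: algebra_simps)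
qed

lemma dist_pair_le:
  fixes a a' :: "'a::metric_space" and p p' :: "'b::metric_space"
  shows "dist (a, p) (a', p') \<le> dist a a' + dist p p'"
  unfolding dist_Pair_Pair by (rule sqrt_sum_squares_le_sum) auto

lemma dist_triple_le:
  fixes a a' :: real and p p' :: "'b::metric_space" and v v' :: real
  shows "dist (a, p, v) (a', p', v') \<le> \<bar>a - a'\<bar> + dist p p' + \<bar>v - v'\<bar>"
proof -
  have "dist (a, p, v) (a', p', v') \<le> dist a a' + dist (p, v) (p', v')" by (rule dist_pair_le)
  also have "dist (p, v) (p', v') \<le> dist p p' + dist v v'" by (rule dist_pair_le)
  finally show ?thesis by (simp add: dist_real_def)
qed

lemma uc_intro_le:
  assumes "\<And>\<epsilon>. \<epsilon> > 0 \<Longrightarrow> \<exists>\<delta>>0. \<forall>x\<in>S. \<forall>y\<in>S. dist x y < \<delta> \<longrightarrow> dist (g x) (g y) \<le> \<epsilon>"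
  shows "uniformly_continuous_on S g"
  unfolding uniformly_continuous_on_def
proof (intro allI impI)
  fix e :: real assume "e > 0"
  then obtain d where "d > 0" "\<forall>x\<in>S. \<forall>y\<in>S. dist x y < d \<longrightarrow> dist (g x) (g y) \<le> e/2"
    using assms[of "e/2"] by auto
  then show "\<exists>d>0. \<forall>x\<in>S. \<forall>x'\<in>S. dist x' x < d \<longrightarrow> dist (g x') (g x) < e"
    using \<open>e > 0\<close> by (intro exI[of _ d]) force
qed

lemma deriv_ineq:
  fixes u1 u2 K1 K2 fa fb f2 \<epsilon>1 \<epsilon>2 \<alpha> c m :: real
  assumes c: "c > 0" "c \<le> u2" and u12: "u2 < u1" and K2: "K2 \<ge> 0"
    and K12: "\<bar>K1 - K2\<bar> \<le> \<epsilon>1" and fab: "fa - fb \<le> - \<alpha> * (u1 - u2)"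
    and fb2: "\<bar>fb - f2\<bar> \<le> \<epsilon>2" and a: "\<alpha> > 0" and wm: "ln u1 - ln u2 > m"
  shows "(K1 + u1 * fa) / u1 - (K2 + u2 * f2) / u2 \<le> \<epsilon>1 / c + \<epsilon>2 - \<alpha> * c * m"
proof -
  have u1p: "u1 > 0" "u2 > 0" using c u12 by auto
  have eq: "(K1 + u1 * fa) / u1 - (K2 + u2 * f2) / u2 = (K1 - K2) / u1 + K2 * (1/u1 - 1/u2) + (fa - fb) + (fb - f2)"
    using u1p by (simp add: field_simps)
  have t1: "(K1 - K2) / u1 \<le> \<epsilon>1 / c"
  proof -
    have "(K1 - K2) / u1 \<le> \<bar>K1 - K2\<bar> / u1" using u1p by (simp add: divide_right_mono)
    also have "\<dots> \<le> \<epsilon>1 / u1" using K12 u1p by (simp add: divide_right_mono)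
    also have "\<dots> \<le> \<epsilon>1 / c" using c u12 K12 by (intro divide_left_mono) auto
    finally show ?thesis .
  qed
  have t2: "K2 * (1/u1 - 1/u2) \<le> 0"
    using K2 u1p u12 by (intro mult_nonneg_nonpos) (auto simp: field_simps)
  have w: "ln u1 - ln u2 \<le> (u1 - u2) / u2"
  proof -
    have "ln (u1 / u2) \<le> u1 / u2 - 1" using u1p by (intro ln_le_minus_one) auto
    then show ?thesis using u1p by (simp add: ln_div field_simps)
  qed
  have "c * m \<le> u1 - u2"
  proof -
    have "m \<le> (u1 - u2) / u2" using w wm by simp
    then have "u2 * m \<le> u1 - u2" using u1p by (simp add: field_simps)
    moreover have "c * m \<le> u2 * m \<or> m \<le> 0" using c by (auto intro: mult_right_mono)
    moreover have "m \<le> 0 \<Longrightarrow> c * m \<le> u1 - u2"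
    proof -
      assume "m \<le> 0" then have "c * m \<le> 0" using c by (simp add: mult_nonneg_nonpos)
      then show ?thesis using u12 by simp
    qed
    ultimately show ?thesis by auto
  qed
  then have "\<alpha> * (c * m) \<le> \<alpha> * (u1 - u2)" using a by (intro mult_left_mono) auto
  then have t3: "fa - fb \<le> - \<alpha> * c * m" using fab by (simp add: algebra_simps)
  have t4: "fb - f2 \<le> \<epsilon>2" using fb2 by simp
  show ?thesis using eq t1 t2 t3 t4 by linarith
qed

lemma ln_diff_to_diff:
  fixes u1 u2 C m :: real
  assumes "0 < u2" "u2 \<le> u1" "u1 \<le> C" "ln u1 - ln u2 \<le> m"
  shows "u1 - u2 \<le> C * m"
proof -
  have u1: "u1 > 0" using assms by simp
  have "ln (u2 / u1) \<le> u2 / u1 - 1" using assms u1 by (intro ln_le_minus_one) auto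
  then have "ln u2 - ln u1 \<le> (u2 - u1) / u1" using assms u1 by (simp add: ln_div field_simps)
  moreover have "(u2 - u1) / u1 = - ((u1 - u2) / u1)" by (simp add: minus_divide_left)
  ultimately have "(u1 - u2) / u1 \<le> ln u1 - ln u2" by linarith
  then have h: "(u1 - u2) / u1 \<le> m" using assms by linarith
  then have "u1 - u2 \<le> u1 * m" using u1 by (simp add: field_simps)
  moreover have "m \<ge> 0" using h assms u1 by (smt (verit) divide_nonneg_pos)
  then have "u1 * m \<le> C * m" using assms by (intro mult_right_mono) auto
  ultimately show ?thesis by simp
qed

lemma prod_diff_bound:
  fixes a1 a2 b1 b2 A B :: real
  assumes "\<bar>a1\<bar> \<le> A" "\<bar>b2\<bar> \<le> B"
  shows "\<bar>a1 * b1 - a2 * b2\<bar> \<le> A * \<bar>b1 - b2\<bar> + B * \<bar>a1 - a2\<bar>"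
proof -
  have "a1 * b1 - a2 * b2 = a1 * (b1 - b2) + b2 * (a1 - a2)" by (simp add: algebra_simps)
  then have "\<bar>a1 * b1 - a2 * b2\<bar> \<le> \<bar>a1\<bar> * \<bar>b1 - b2\<bar> + \<bar>b2\<bar> * \<bar>a1 - a2\<bar>"
    by (simp add: abs_mult[symmetric] abs_triangle_ineq)
  also have "\<dots> \<le> A * \<bar>b1 - b2\<bar> + B * \<bar>a1 - a2\<bar>"
    using assms by (intro add_mono mult_right_mono) auto
  finally show ?thesis .
qed


theorem lemma3p2:
  fixes D :: "'a::euclidean_space set"
    and \<kappa> :: "'a \<Rightarrow> real"
    and f fu :: "real \<Rightarrow> 'a \<Rightarrow> real \<Rightarrow> real"
    and u :: "real \<Rightarrow> 'a \<Rightarrow> real"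
  assumes dom: "admissible_domain D"
    and ker: "kernel_hyp \<kappa>"
    and nl: "nonlin_hyp D f fu"
    and meas: "(\<lambda>p. u (fst p) (snd p)) \<in> borel_measurable (restrict_space borel (UNIV \<times> closure D))"
    and pos: "\<exists>c>0. \<forall>t. \<forall>x\<in>closure D. u t x \<ge> c"
    and bdd: "\<exists>C. \<forall>t. \<forall>x\<in>closure D. u t x \<le> C"
    and eqn: "\<forall>t. \<forall>x\<in>closure D.
        ((\<lambda>s. u s x) has_real_derivative
           ((LINT y:D|lborel. \<kappa> (y - x) * u t y) + u t x * f t x (u t x))) (at t)"
  shows "uniformly_continuous_on (UNIV \<times> closure D) (\<lambda>(t, x). u t x) \<and>
         (\<forall>t. in_X (closure D) (u t) \<and>
              has_X_derivative (closure D) u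
                (\<lambda>x. (LINT y:D|lborel. \<kappa> (y - x) * u t y) + u t x * f t x (u t x)) t)"
proof -
  define S where "S = closure D"
  have DS: "D \<subseteq> S" unfolding S_def by (rule closure_subset)
  have Sne: "S \<noteq> {}" using dom unfolding admissible_domain_def S_def by auto
  have Sc: "closed S" unfolding S_def by simp
  have Dopen: "open D" using dom unfolding admissible_domain_def by auto
  obtain c where c0: "c > 0" and cl: "\<And>t x. x \<in> S \<Longrightarrow> c \<le> u t x" using pos S_def by auto
  obtain C0 where C0: "\<And>t x. x \<in> S \<Longrightarrow> u t x \<le> C0" using bdd S_def by auto
  define C where "C = max C0 c"
  have cC: "c \<le> C" and Cp: "C > 0" and Cu: "\<And>t x. x \<in> S \<Longrightarrow> u t x \<le> C"
    using c0 C0 by (auto simp: C_def le_max_iff_disj)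
  obtain g :: "'a \<Rightarrow> 'a" where kd: "\<And>x. (\<kappa> has_derivative (\<lambda>h. g x \<bullet> h)) (at x)"
    and k0: "\<And>x. \<kappa> x \<ge> 0" and ki: "integrable lborel \<kappa>" and k1: "integral\<^sup>L lborel \<kappa> = 1"
    using ker unfolding kernel_hyp_def by blast
  have kc: "continuous_on UNIV \<kappa>"
    by (intro continuous_at_imp_continuous_on ballI has_derivative_continuous[OF kd])
  define U where "U t y = indicator D y * u t y" for t y
  have Um: "U t \<in> borel_measurable borel" for t
  proof -
    have m1: "(\<lambda>y. (t, y)) \<in> restrict_space borel S \<rightarrow>\<^sub>M restrict_space borel (UNIV \<times> S)"
    proof (rule measurable_restrict_space3)
      show "(\<lambda>y::'a. (t, y)) \<in> borel \<rightarrow>\<^sub>M borel"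
        by (intro borel_measurable_continuous_onI continuous_intros)
      show "(\<lambda>y. (t, y)) \<in> S \<rightarrow> UNIV \<times> S" by auto
    qed
    have "(\<lambda>p. u (fst p) (snd p)) \<circ> (\<lambda>y. (t, y)) \<in> borel_measurable (restrict_space borel S)"
      using measurable_comp[OF m1 meas[folded S_def]] .
    then have "(\<lambda>y. u t y) \<in> borel_measurable (restrict_space borel S)" by (simp add: o_def)
    then have m2: "(\<lambda>y. indicator S y *\<^sub>R u t y) \<in> borel_measurable borel"
      using borel_measurable_restrict_space_iff[of S borel "u t"] Sc by auto
    have m3: "(\<lambda>y. indicator D y * (indicator S y *\<^sub>R u t y)) \<in> borel_measurable borel"
      using m2 borel_open[OF Dopen] by (intro borel_measurable_times borel_measurable_indicator) auto
    have "U t = (\<lambda>y. indicator D y * (indicator S y *\<^sub>R u t y))"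
      using DS by (intro ext) (auto simp: U_def split: split_indicator)
    then show ?thesis using m3 by simp
  qed
  have Ub: "\<bar>U t y\<bar> \<le> C" for t y
    using cl[of y t] Cu[of y t] DS c0 Cp by (auto simp: U_def split: split_indicator)
  have U0: "U t y \<ge> 0" for t y
    using cl[of y t] DS c0 by (auto simp: U_def split: split_indicator)
  define K where "K t x = (LINT y:D|lborel. \<kappa> (y - x) * u t y)" for t x
  have KU: "K t x = (LINT y|lborel. \<kappa> (y - x) * U t y)" for t x
    unfolding K_def U_def set_lebesgue_integral_def by (simp add: mult.left_commute)
  note KF = K_facts[OF kc ki k0 k1 Um Ub]
  have Kb: "\<bar>K t x\<bar> \<le> C" for t x unfolding KU by (rule KF(2))
  have K0: "K t x \<ge> 0" for t x unfolding KU
    using k0 U0 by (intro integral_nonneg_AE AE_I2) auto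
  define \<Delta> where "\<Delta> h = (LINT z|lborel. \<bar>\<kappa> (z + h) - \<kappa> z\<bar>)" for h
  have KL: "\<bar>K t x1 - K t x2\<bar> \<le> C * \<Delta> (x1 - x2)" for t x1 x2
    unfolding KU \<Delta>_def by (rule KF(3))
  have Kt: "\<bar>K s x - K t x\<bar> \<le> B" if "\<And>y. \<bar>U s y - U t y\<bar> \<le> B" for s t x B
  proof -
    have m: "(\<lambda>y. U s y - U t y) \<in> borel_measurable borel" using Um[of s] Um[of t] by measurable
    have "K s x - K t x = (LINT y|lborel. \<kappa> (y - x) * (U s y - U t y))"
      unfolding KU using KF(1)[of x s] KF(1)[of x t]
      by (subst Bochner_Integration.integral_diff[symmetric]) (auto simp: algebra_simps)
    also have "\<bar>\<dots>\<bar> \<le> B" by (rule K_facts(2)[OF kc ki k0 k1 m that])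
    finally show ?thesis .
  qed
  define ud where "ud t x = K t x + u t x * f t x (u t x)" for t x
  have der: "((\<lambda>s. u s x) has_real_derivative ud t x) (at t)" if "x \<in> S" for t x
    using eqn that unfolding ud_def K_def S_def by blast
  have bE: "bounded {c..C}" by simp
  have nlE: "uniformly_continuous_on (UNIV \<times> S \<times> {c..C}) (\<lambda>(t, x, v). f t x v)"
     "bounded ((\<lambda>(t, x, v). f t x v) ` (UNIV \<times> S \<times> {c..C}))"
     "uniformly_continuous_on (UNIV \<times> S \<times> {c..C}) (\<lambda>(t, x, v). fu t x v)"
     "bounded ((\<lambda>(t, x, v). fu t x v) ` (UNIV \<times> S \<times> {c..C}))"
    using nl bE unfolding nonlin_hyp_def S_def by blast+
  have fder: "((\<lambda>v. f t x v) has_real_derivative fu t x v) (at v)" if "x \<in> S" for t x v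
    using nl that unfolding nonlin_hyp_def S_def by blast
  have Gneg0: "(SUP (t, x)\<in>UNIV \<times> S. fu t x v) < 0" if "v \<ge> 0" for v
    using nl that unfolding nonlin_hyp_def S_def by blast
  obtain F where F: "\<And>t x v. x \<in> S \<Longrightarrow> v \<in> {c..C} \<Longrightarrow> \<bar>f t x v\<bar> \<le> F"
    using nlE(2) unfolding bounded_iff by fastforce
  obtain Fu where Fu: "\<And>t x v. x \<in> S \<Longrightarrow> v \<in> {c..C} \<Longrightarrow> \<bar>fu t x v\<bar> \<le> Fu"
    using nlE(4) unfolding bounded_iff by fastforce
  obtain x0 where x0: "x0 \<in> S" using Sne by auto
  have F0: "F \<ge> 0" using F[OF x0, of c 0] cC by auto
  have uc: "u t x \<in> {c..C}" if "x \<in> S" for t x using cl[OF that] Cu[OF that] by auto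
  define L where "L = C + C * F"
  have L0: "L \<ge> 0" using Cp F0 by (simp add: L_def)
  have udb: "\<bar>ud t x\<bar> \<le> L" if "x \<in> S" for t x
  proof -
    have "\<bar>u t x * f t x (u t x)\<bar> \<le> C * F"
    proof -
      have a: "\<bar>u t x\<bar> \<le> C" using uc[OF that, of t] c0 by auto
      have b: "\<bar>f t x (u t x)\<bar> \<le> F" using F[OF that uc[OF that]] .
      show ?thesis unfolding abs_mult using a b Cp by (intro mult_mono) auto
    qed
    then show ?thesis using Kb[of t x] by (simp add: ud_def L_def)
  qed
  have lip: "\<bar>u s x - u t x\<bar> \<le> L * \<bar>s - t\<bar>" if xS: "x \<in> S" for s t x
  proof -
    obtain z where "u s x - u t x = (s - t) * ud z x"
      using mvt_any[of "\<lambda>s. u s x" "\<lambda>s. ud s x" t s] der[OF xS] by blast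
    then have "\<bar>u s x - u t x\<bar> = \<bar>s - t\<bar> * \<bar>ud z x\<bar>" by (simp add: abs_mult)
    also have "\<dots> \<le> \<bar>s - t\<bar> * L" using udb[OF xS] by (intro mult_left_mono) auto
    finally show ?thesis by (simp add: mult.commute)
  qed
  obtain \<alpha> where ap: "\<alpha> > 0" and aF: "\<And>t x v. x \<in> S \<Longrightarrow> v \<in> {c..C} \<Longrightarrow> fu t x v \<le> -\<alpha>"
  proof -
    define G where "G v = (SUP (t, x)\<in>UNIV \<times> S. fu t x v)" for v
    have bdda: "bdd_above ((\<lambda>(t, x). fu t x v) ` (UNIV \<times> S))" if "v \<in> {c..C}" for v
      using Fu that by (intro bdd_aboveI2[where M=Fu]) (auto simp: abs_le_iff)
    have Gup: "fu t x v \<le> G v" if "x \<in> S" "v \<in> {c..C}" for t x v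
      unfolding G_def using cSUP_upper[OF _ bdda[OF that(2)], of "(t, x)"] that by auto
    have Gle: "G v \<le> G v' + e" if v: "v \<in> {c..C}" "v' \<in> {c..C}"
      and e: "\<And>t x. x \<in> S \<Longrightarrow> fu t x v \<le> fu t x v' + e" for v v' e
      unfolding G_def
    proof (rule cSUP_least)
      show "UNIV \<times> S \<noteq> {}" using Sne by auto
      fix p :: "real \<times> 'a" assume "p \<in> UNIV \<times> S"
      then obtain t x where p: "p = (t, x)" "x \<in> S" by auto
      have "fu t x v \<le> G v' + e" using e[OF p(2), of t] Gup[OF p(2) v(2), of t] by simp
      then show "(\<lambda>(t, x). fu t x v) p \<le> (SUP (t, x)\<in>UNIV \<times> S. fu t x v') + e"
        using p by (simp add: G_def)
    qed
    have Gc: "continuous_on {c..C} G"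
      unfolding continuous_on_iff
    proof (intro ballI allI impI)
      fix v e assume v: "v \<in> {c..C}" and e: "(e::real) > 0"
      obtain d where d: "d > 0" and d': "\<forall>p\<in>UNIV \<times> S \<times> {c..C}. \<forall>p'\<in>UNIV \<times> S \<times> {c..C}.
          dist p' p < d \<longrightarrow> dist ((\<lambda>(t, x, v). fu t x v) p') ((\<lambda>(t, x, v). fu t x v) p) < e/2"
        using nlE(3) e unfolding uniformly_continuous_on_def by (meson half_gt_zero)
      show "\<exists>d>0. \<forall>v'\<in>{c..C}. dist v' v < d \<longrightarrow> dist (G v') (G v) < e"
      proof (intro exI[of _ d] conjI ballI impI)
        show "d > 0" by (rule d)
        fix v' assume v': "v' \<in> {c..C}" and dv: "dist v' v < d"
        have cl1: "\<bar>fu t x v' - fu t x v\<bar> < e/2" if "x \<in> S" for t x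
        proof -
          have "dist (t, x, v') (t, x, v) \<le> \<bar>t - t\<bar> + dist x x + \<bar>v' - v\<bar>" by (rule dist_triple_le)
          then have "dist (t, x, v') (t, x, v) < d" using dv by (simp add: dist_real_def)
          then show ?thesis using d'[rule_format, of "(t, x, v)" "(t, x, v')"] that v v'
            by (auto simp: dist_real_def)
        qed
        have "G v' \<le> G v + e/2" using cl1 by (intro Gle[OF v' v]) (smt (verit))
        moreover have "G v \<le> G v' + e/2" using cl1 by (intro Gle[OF v v']) (smt (verit))
        ultimately show "dist (G v') (G v) < e" using e by (simp add: dist_real_def abs_le_iff)
      qed
    qed
    obtain v0 where v0: "v0 \<in> {c..C}" "\<And>v. v \<in> {c..C} \<Longrightarrow> G v \<le> G v0"
      using continuous_attains_sup[OF compact_Icc _ Gc] cC by auto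
    have "G v0 < 0" unfolding G_def using Gneg0 v0(1) c0 by auto
    moreover have "fu t x v \<le> - (- G v0)" if "x \<in> S" "v \<in> {c..C}" for t x v
      using Gup[OF that, of t] v0(2)[OF that(2)] by simp
    ultimately show ?thesis by (intro that[of "- G v0"]) auto
  qed
  have fmono: "f t x v1 - f t x v2 \<le> -\<alpha> * (v1 - v2)"
    if xS: "x \<in> S" and v: "c \<le> v2" "v2 \<le> v1" "v1 \<le> C" for t x v1 v2
  proof -
    have "(\<lambda>v. f t x v + \<alpha> * v) v1 \<le> (\<lambda>v. f t x v + \<alpha> * v) v2"
    proof (rule DERIV_nonpos_imp_nonincreasing[OF v(2)])
      fix y assume y: "v2 \<le> y" "y \<le> v1"
      have "((\<lambda>v. f t x v + \<alpha> * v) has_real_derivative fu t x y + \<alpha>) (at y)"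
        using fder[OF xS] by (auto intro!: derivative_eq_intros)
      moreover have "fu t x y + \<alpha> \<le> 0" using aF[OF xS, of y t] y v by auto
      ultimately show "\<exists>d. ((\<lambda>v. f t x v + \<alpha> * v) has_real_derivative d) (at y) \<and> d \<le> 0" by blast
    qed
    then show ?thesis by (simp add: algebra_simps)
  qed
  have SP: "\<exists>\<delta>>0. \<forall>x1\<in>S. \<forall>x2\<in>S. dist x1 x2 < \<delta> \<longrightarrow> (\<forall>t. \<bar>u t x1 - u t x2\<bar> \<le> \<epsilon>)"
    if ep: "\<epsilon> > 0" for \<epsilon>
  proof -
    define m where "m = \<epsilon> / C"
    have m0: "m > 0" using ep Cp by (simp add: m_def)
    define q where "q = \<alpha> * c * m / 2"
    have q0: "q > 0" using ap c0 m0 by (simp add: q_def)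
    obtain \<delta>1 where d1: "\<delta>1 > 0" and d1': "\<And>h. norm h < \<delta>1 \<Longrightarrow> \<Delta> h \<le> c * q / 2 / C"
      using L1_translate_cont[OF kc ki, of "c * q / 2 / C"] q0 c0 Cp unfolding \<Delta>_def by auto
    obtain \<delta>2 where d2: "\<delta>2 > 0" and d2': "\<forall>p\<in>UNIV \<times> S \<times> {c..C}. \<forall>p'\<in>UNIV \<times> S \<times> {c..C}.
          dist p' p < \<delta>2 \<longrightarrow> dist ((\<lambda>(t, x, v). f t x v) p') ((\<lambda>(t, x, v). f t x v) p) < q/2"
      using nlE(1) q0 unfolding uniformly_continuous_on_def by (meson half_gt_zero)
    define \<delta> where "\<delta> = min \<delta>1 \<delta>2"
    have one: "ln (u t x1) - ln (u t x2) \<le> m"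
      if x12: "x1 \<in> S" "x2 \<in> S" "dist x1 x2 < \<delta>" for t x1 x2
    proof (rule ode_bound[where w="\<lambda>t. ln (u t x1) - ln (u t x2)" and w'="\<lambda>t. ud t x1 / u t x1 - ud t x2 / u t x2"
          and B="2 * (\<bar>ln c\<bar> + \<bar>ln C\<bar>)" and \<beta>=q])
      show "q > 0" by (rule q0)
      fix t
      have up: "u t x > 0" if "x \<in> S" for x using cl[OF that, of t] c0 by simp
      have dln: "((\<lambda>s. ln (u s x)) has_real_derivative ud t x / u t x) (at t)" if "x \<in> S" for x
        using DERIV_chain2[OF DERIV_ln_divide[OF up[OF that]] der[OF that, of t]] by simp
      show "((\<lambda>t. ln (u t x1) - ln (u t x2)) has_real_derivative ud t x1 / u t x1 - ud t x2 / u t x2) (at t)"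
        using dln[OF x12(1)] dln[OF x12(2)] by (rule DERIV_diff)
      have lnb: "\<bar>ln (u t x)\<bar> \<le> \<bar>ln c\<bar> + \<bar>ln C\<bar>" if "x \<in> S" for x
      proof -
        have "ln c \<le> ln (u t x)" using cl[OF that, of t] c0 by simp
        moreover have "ln (u t x) \<le> ln C" using Cu[OF that, of t] up[OF that] by simp
        ultimately show ?thesis by linarith
      qed
      show "\<bar>ln (u t x1) - ln (u t x2)\<bar> \<le> 2 * (\<bar>ln c\<bar> + \<bar>ln C\<bar>)"
        using lnb[OF x12(1)] lnb[OF x12(2)] by (smt (verit) abs_triangle_ineq4)
      assume wm: "m < ln (u t x1) - ln (u t x2)"
      have u21: "u t x2 < u t x1"
        using wm m0 up[OF x12(1)] up[OF x12(2)] by (smt (verit) ln_less_cancel_iff)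
      have K12: "\<bar>K t x1 - K t x2\<bar> \<le> c * q / 2"
      proof -
        have "norm (x1 - x2) < \<delta>1" using x12(3) by (simp add: \<delta>_def dist_norm)
        then have "C * \<Delta> (x1 - x2) \<le> C * (c * q / 2 / C)" using d1' Cp by (intro mult_left_mono) auto
        then show ?thesis using KL[of t x1 x2] Cp by simp
      qed
      have fab: "f t x1 (u t x1) - f t x1 (u t x2) \<le> - \<alpha> * (u t x1 - u t x2)"
        using fmono[OF x12(1), of "u t x2" "u t x1" t] cl[OF x12(2)] Cu[OF x12(1)] u21 by simp
      have fb2: "\<bar>f t x1 (u t x2) - f t x2 (u t x2)\<bar> \<le> q / 2"
      proof -
        have "dist (t, x1, u t x2) (t, x2, u t x2) \<le> \<bar>t - t\<bar> + dist x1 x2 + \<bar>u t x2 - u t x2\<bar>"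
          by (rule dist_triple_le)
        then have "dist (t, x1, u t x2) (t, x2, u t x2) < \<delta>2" using x12(3) by (simp add: \<delta>_def)
        then show ?thesis using d2'[rule_format, of "(t, x2, u t x2)" "(t, x1, u t x2)"] x12 uc[OF x12(2)]
          by (auto simp: dist_real_def)
      qed
      have "ud t x1 / u t x1 - ud t x2 / u t x2 \<le> (c * q / 2) / c + q / 2 - \<alpha> * c * m"
        unfolding ud_def
        by (rule deriv_ineq[OF c0 cl[OF x12(2)] u21 K0 K12 fab fb2 ap wm])
      also have "\<dots> = - q" using c0 by (simp add: q_def field_simps)
      finally show "ud t x1 / u t x1 - ud t x2 / u t x2 \<le> - q" .
    qed
    show ?thesis
    proof (intro exI[of _ \<delta>] conjI ballI impI allI)
      show "\<delta> > 0" using d1 d2 by (simp add: \<delta>_def)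
      fix x1 x2 t assume x1: "x1 \<in> S" and x2: "x2 \<in> S" and d: "dist x1 x2 < \<delta>"
      have d': "dist x2 x1 < \<delta>" using d by (simp add: dist_commute)
      have up: "u t x > 0" if "x \<in> S" for x using cl[OF that, of t] c0 by simp
      show "\<bar>u t x1 - u t x2\<bar> \<le> \<epsilon>"
      proof (cases "u t x2 \<le> u t x1")
        case True
        have "u t x1 - u t x2 \<le> C * m"
          using ln_diff_to_diff[OF up[OF x2] True Cu[OF x1] one[OF x1 x2 d]] .
        then show ?thesis using True Cp by (simp add: m_def)
      next
        case False
        have "u t x2 - u t x1 \<le> C * m"
          using ln_diff_to_diff[OF up[OF x1] _ Cu[OF x2] one[OF x2 x1 d']] False by simp
        then show ?thesis using False Cp by (simp add: m_def)
      qed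
    qed
  qed
  have ucu: "uniformly_continuous_on (UNIV \<times> S) (\<lambda>(t, x). u t x)"
  proof (rule uc_intro_le)
    fix \<epsilon> :: real assume ep: "\<epsilon> > 0"
    obtain \<delta>s where ds: "\<delta>s > 0" and ds': "\<forall>x1\<in>S. \<forall>x2\<in>S. dist x1 x2 < \<delta>s \<longrightarrow> (\<forall>t. \<bar>u t x1 - u t x2\<bar> \<le> \<epsilon>/2)"
      using SP[of "\<epsilon>/2"] ep by auto
    define \<delta> where "\<delta> = min \<delta>s (\<epsilon> / (2 * (L + 1)))"
    show "\<exists>\<delta>>0. \<forall>p\<in>UNIV \<times> S. \<forall>p'\<in>UNIV \<times> S. dist p p' < \<delta> \<longrightarrow>
        dist ((\<lambda>(t, x). u t x) p) ((\<lambda>(t, x). u t x) p') \<le> \<epsilon>"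
    proof (intro exI[of _ \<delta>] conjI ballI impI)
      show "\<delta> > 0" using ds ep L0 by (simp add: \<delta>_def)
      fix p p' :: "real \<times> 'a" assume p: "p \<in> UNIV \<times> S" and p': "p' \<in> UNIV \<times> S" and d: "dist p p' < \<delta>"
      obtain t x where pp: "p = (t, x)" "x \<in> S" using p by auto
      obtain s y where pp': "p' = (s, y)" "y \<in> S" using p' by auto
      have dxy: "dist x y < \<delta>s" using dist_snd_le[of p p'] d pp pp' by (simp add: \<delta>_def)
      have dts: "\<bar>t - s\<bar> < \<epsilon> / (2 * (L + 1))" using dist_fst_le[of p p'] d pp pp' by (simp add: \<delta>_def dist_real_def)
      have "\<bar>u t x - u t y\<bar> \<le> \<epsilon>/2" using ds' pp(2) pp'(2) dxy by blast
      moreover have "\<bar>u t y - u s y\<bar> \<le> L * \<bar>t - s\<bar>" using lip[OF pp'(2)] .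
      moreover have "L * \<bar>t - s\<bar> \<le> \<epsilon>/2"
      proof -
        have "L * \<bar>t - s\<bar> \<le> (L + 1) * (\<epsilon> / (2 * (L + 1)))" using dts L0
          by (intro mult_mono) auto
        also have "\<dots> = \<epsilon>/2" using L0 by (simp add: field_simps)
        finally show ?thesis .
      qed
      ultimately show "dist ((\<lambda>(t, x). u t x) p) ((\<lambda>(t, x). u t x) p') \<le> \<epsilon>"
        using pp pp' by (simp add: dist_real_def) (smt (verit))
    qed
  qed
  have inXu: "in_X S (u t)" for t
    unfolding in_X_def
  proof
    show "bounded (u t ` S)" unfolding bounded_iff
    proof (intro exI[of _ C] ballI)
      fix v assume "v \<in> u t ` S"
      then obtain x where "x \<in> S" "v = u t x" by auto
      then show "norm v \<le> C" using Cu[of x t] cl[of x t] c0 by auto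
    qed
    show "uniformly_continuous_on S (u t)"
    proof (rule uc_intro_le)
      fix \<epsilon> :: real assume "\<epsilon> > 0"
      then obtain \<delta> where "\<delta> > 0" "\<forall>x1\<in>S. \<forall>x2\<in>S. dist x1 x2 < \<delta> \<longrightarrow> (\<forall>t. \<bar>u t x1 - u t x2\<bar> \<le> \<epsilon>)"
        using SP by blast
      then show "\<exists>\<delta>>0. \<forall>x\<in>S. \<forall>y\<in>S. dist x y < \<delta> \<longrightarrow> dist (u t x) (u t y) \<le> \<epsilon>"
        by (auto simp: dist_real_def)
    qed
  qed
  have inXud: "in_X S (ud t)" for t
    unfolding in_X_def
  proof
    show "bounded (ud t ` S)" unfolding bounded_iff
    proof (intro exI[of _ L] ballI)
      fix v assume "v \<in> ud t ` S"
      then obtain x where "x \<in> S" "v = ud t x" by auto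
      then show "norm v \<le> L" using udb by auto
    qed
    show "uniformly_continuous_on S (ud t)"
    proof (rule uc_intro_le)
      fix \<epsilon> :: real assume ep: "\<epsilon> > 0"
      obtain \<delta>K where dK: "\<delta>K > 0" and dK': "\<And>h. norm h < \<delta>K \<Longrightarrow> \<Delta> h \<le> \<epsilon> / (3 * C)"
        using L1_translate_cont[OF kc ki, of "\<epsilon> / (3 * C)"] ep Cp unfolding \<Delta>_def by auto
      obtain \<delta>f where df: "\<delta>f > 0" and df': "\<forall>p\<in>UNIV \<times> S \<times> {c..C}. \<forall>p'\<in>UNIV \<times> S \<times> {c..C}.
          dist p' p < \<delta>f \<longrightarrow> dist ((\<lambda>(t, x, v). f t x v) p') ((\<lambda>(t, x, v). f t x v) p) < \<epsilon> / (3 * C)"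
        using nlE(1)[unfolded uniformly_continuous_on_def, rule_format, of "\<epsilon> / (3 * C)"] ep Cp by auto
      define \<epsilon>' where "\<epsilon>' = min (\<epsilon> / (3 * (F + 1))) (\<delta>f / 3)"
      have e'0: "\<epsilon>' > 0" using ep F0 df by (simp add: \<epsilon>'_def)
      obtain \<delta>u where du: "\<delta>u > 0" and du': "\<forall>x1\<in>S. \<forall>x2\<in>S. dist x1 x2 < \<delta>u \<longrightarrow> (\<forall>t. \<bar>u t x1 - u t x2\<bar> \<le> \<epsilon>')"
        using SP[OF e'0] by blast
      show "\<exists>\<delta>>0. \<forall>x\<in>S. \<forall>y\<in>S. dist x y < \<delta> \<longrightarrow> dist (ud t x) (ud t y) \<le> \<epsilon>"
      proof (intro exI[of _ "min \<delta>K (min (\<delta>f / 2) \<delta>u)"] conjI ballI impI)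
        show "0 < min \<delta>K (min (\<delta>f / 2) \<delta>u)" using dK df du by simp
        fix x1 x2 assume x1: "x1 \<in> S" and x2: "x2 \<in> S" and d: "dist x1 x2 < min \<delta>K (min (\<delta>f / 2) \<delta>u)"
        have A: "\<bar>K t x1 - K t x2\<bar> \<le> \<epsilon> / 3"
        proof -
          have "norm (x1 - x2) < \<delta>K" using d by (simp add: dist_norm)
          then have "C * \<Delta> (x1 - x2) \<le> C * (\<epsilon> / (3 * C))" using dK' Cp by (intro mult_left_mono) auto
          then show ?thesis using KL[of t x1 x2] Cp by simp
        qed
        have uu: "\<bar>u t x1 - u t x2\<bar> \<le> \<epsilon>'" using du' x1 x2 d by auto
        have ff: "\<bar>f t x1 (u t x1) - f t x2 (u t x2)\<bar> \<le> \<epsilon> / (3 * C)"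
        proof -
          have "dist (t, x1, u t x1) (t, x2, u t x2) \<le> \<bar>t - t\<bar> + dist x1 x2 + \<bar>u t x1 - u t x2\<bar>"
            by (rule dist_triple_le)
          also have "\<dots> < \<delta>f"
          proof -
            have "dist x1 x2 < \<delta>f / 2" using d by simp
            moreover have "\<bar>u t x1 - u t x2\<bar> \<le> \<delta>f / 3" using uu by (simp add: \<epsilon>'_def)
            ultimately show ?thesis using df by simp
          qed
          finally have "dist (t, x1, u t x1) (t, x2, u t x2) < \<delta>f" .
          then show ?thesis using df'[rule_format, of "(t, x2, u t x2)" "(t, x1, u t x1)"] x1 x2 uc[OF x1] uc[OF x2]
            by (auto simp: dist_real_def)
        qed
        have B: "\<bar>u t x1 * f t x1 (u t x1) - u t x2 * f t x2 (u t x2)\<bar> \<le> 2 * \<epsilon> / 3"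
        proof -
          have "\<bar>u t x1 * f t x1 (u t x1) - u t x2 * f t x2 (u t x2)\<bar>
              \<le> C * \<bar>f t x1 (u t x1) - f t x2 (u t x2)\<bar> + F * \<bar>u t x1 - u t x2\<bar>"
            using uc[OF x1, of t] c0 F[OF x2 uc[OF x2]] by (intro prod_diff_bound) auto
          also have "\<dots> \<le> C * (\<epsilon> / (3 * C)) + F * (\<epsilon> / (3 * (F + 1)))"
            using ff uu Cp F0 by (intro add_mono mult_left_mono) (auto simp: \<epsilon>'_def)
          also have "F * (\<epsilon> / (3 * (F + 1))) \<le> \<epsilon> / 3"
            using F0 ep by (simp add: field_simps)
          then have "C * (\<epsilon> / (3 * C)) + F * (\<epsilon> / (3 * (F + 1))) \<le> 2 * \<epsilon> / 3" using Cp by simp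
          finally show ?thesis .
        qed
        show "dist (ud t x1) (ud t x2) \<le> \<epsilon>"
          using A B unfolding ud_def dist_real_def by linarith
      qed
    qed
  qed
  have TC: "\<exists>d>0. \<forall>s. \<bar>s - t\<bar> < d \<longrightarrow> (\<forall>x\<in>S. \<bar>ud s x - ud t x\<bar> \<le> \<epsilon>)" if ep: "\<epsilon> > 0" for t \<epsilon>
  proof -
    obtain \<delta>f where df: "\<delta>f > 0" and df': "\<forall>p\<in>UNIV \<times> S \<times> {c..C}. \<forall>p'\<in>UNIV \<times> S \<times> {c..C}.
        dist p' p < \<delta>f \<longrightarrow> dist ((\<lambda>(t, x, v). f t x v) p') ((\<lambda>(t, x, v). f t x v) p) < \<epsilon> / (3 * C)"
      using nlE(1)[unfolded uniformly_continuous_on_def, rule_format, of "\<epsilon> / (3 * C)"] ep Cp by auto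
    define Q where "Q = (1 + L) * (1 + F)"
    have Q0: "Q > 0" using L0 F0 by (simp add: Q_def)
    define d where "d = min (\<delta>f / (1 + L)) (\<epsilon> / (3 * Q))"
    have d0: "d > 0" using df ep L0 Q0 by (simp add: d_def)
    show ?thesis
    proof (intro exI[of _ d] conjI allI impI ballI)
      show "d > 0" by (rule d0)
      fix s x assume sd: "\<bar>s - t\<bar> < d" and x: "x \<in> S"
      have Ld: "L * \<bar>s - t\<bar> \<le> \<epsilon> / 3" and FLd: "F * (L * \<bar>s - t\<bar>) \<le> \<epsilon> / 3"
      proof -
        have "Q * \<bar>s - t\<bar> \<le> Q * (\<epsilon> / (3 * Q))"
          using sd Q0 by (intro mult_left_mono) (auto simp: d_def)
        also have "\<dots> = \<epsilon> / 3" using Q0 by (simp add: field_simps)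
        finally have *: "Q * \<bar>s - t\<bar> \<le> \<epsilon> / 3" .
        have "L * \<bar>s - t\<bar> \<le> Q * \<bar>s - t\<bar>" using L0 F0
          by (intro mult_right_mono) (auto simp: algebra_simps Q_def)
        then show "L * \<bar>s - t\<bar> \<le> \<epsilon> / 3" using * by linarith
        have "F * (L * \<bar>s - t\<bar>) \<le> Q * \<bar>s - t\<bar>" using L0 F0
          by (simp add: algebra_simps Q_def)
        then show "F * (L * \<bar>s - t\<bar>) \<le> \<epsilon> / 3" using * by linarith
      qed
      have A: "\<bar>K s x - K t x\<bar> \<le> \<epsilon> / 3"
      proof -
        have "\<bar>U s y - U t y\<bar> \<le> L * \<bar>s - t\<bar>" for y
          using lip[of y s t] DS L0 by (auto simp: U_def split: split_indicator)
        then have "\<bar>K s x - K t x\<bar> \<le> L * \<bar>s - t\<bar>" by (rule Kt)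
        then show ?thesis using Ld by linarith
      qed
      have uu: "\<bar>u s x - u t x\<bar> \<le> L * \<bar>s - t\<bar>" using lip[OF x] .
      have ff: "\<bar>f s x (u s x) - f t x (u t x)\<bar> \<le> \<epsilon> / (3 * C)"
      proof -
        have "dist (s, x, u s x) (t, x, u t x) \<le> \<bar>s - t\<bar> + dist x x + \<bar>u s x - u t x\<bar>"
          by (rule dist_triple_le)
        also have "\<dots> \<le> (1 + L) * \<bar>s - t\<bar>" using uu by (simp add: algebra_simps)
        also have "\<dots> < (1 + L) * (\<delta>f / (1 + L))" using sd L0 by (intro mult_strict_left_mono) (auto simp: d_def)
        also have "\<dots> = \<delta>f" using L0 by simp
        finally have "dist (s, x, u s x) (t, x, u t x) < \<delta>f" .
        then show ?thesis using df'[rule_format, of "(t, x, u t x)" "(s, x, u s x)"] x uc[OF x]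
          by (auto simp: dist_real_def)
      qed
      have B: "\<bar>u s x * f s x (u s x) - u t x * f t x (u t x)\<bar> \<le> 2 * \<epsilon> / 3"
      proof -
        have "\<bar>u s x * f s x (u s x) - u t x * f t x (u t x)\<bar>
            \<le> C * \<bar>f s x (u s x) - f t x (u t x)\<bar> + F * \<bar>u s x - u t x\<bar>"
          using uc[OF x, of s] c0 F[OF x uc[OF x]] by (intro prod_diff_bound) auto
        also have "\<dots> \<le> C * (\<epsilon> / (3 * C)) + F * (L * \<bar>s - t\<bar>)"
          using ff uu Cp F0 by (intro add_mono mult_left_mono) auto
        also have "\<dots> \<le> 2 * \<epsilon> / 3" using FLd Cp by simp
        finally show ?thesis .
      qed
      show "\<bar>ud s x - ud t x\<bar> \<le> \<epsilon>" using A B unfolding ud_def by linarith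
    qed
  qed
  have hXd: "has_X_derivative S u (ud t) t" for t
    unfolding has_X_derivative_def
  proof (intro conjI allI impI)
    show "in_X S (ud t)" by (rule inXud)
    fix \<epsilon> :: real assume ep: "\<epsilon> > 0"
    obtain d where d: "d > 0" and d': "\<forall>s. \<bar>s - t\<bar> < d \<longrightarrow> (\<forall>x\<in>S. \<bar>ud s x - ud t x\<bar> \<le> \<epsilon>)"
      using TC[OF ep] by blast
    show "\<forall>\<^sub>F h in at 0. \<forall>x\<in>S. \<bar>(u (t + h) x - u t x) / h - ud t x\<bar> \<le> \<epsilon>"
      unfolding eventually_at
    proof (intro exI[of _ d] conjI allI impI ballI)
      show "d > 0" by (rule d)
      fix h :: real and x assume h: "h \<noteq> 0 \<and> dist h 0 < d" and x: "x \<in> S"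
      obtain z where z: "\<bar>z - t\<bar> \<le> \<bar>t + h - t\<bar>" "u (t + h) x - u t x = (t + h - t) * ud z x"
        using mvt_any[of "\<lambda>s. u s x" "\<lambda>s. ud s x" t "t + h"] der[OF x] by blast
      have "(u (t + h) x - u t x) / h = ud z x" using z(2) h by simp
      moreover have "\<bar>z - t\<bar> < d" using z(1) h by simp
      ultimately show "\<bar>(u (t + h) x - u t x) / h - ud t x\<bar> \<le> \<epsilon>" using d' x by simp
    qed
  qed
  have Veq: "(\<lambda>x. (LINT y:D|lborel. \<kappa> (y - x) * u t y) + u t x * f t x (u t x)) = ud t" for t
    by (simp add: fun_eq_iff ud_def K_def)
  show ?thesis
    unfolding Veq S_def[symmetric] using ucu inXu hXd by blast
qed

end
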